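(* For every zero-error variable-length $(k,N)$ network code for the network described in the context, the stopping time $N$ satisfies $$\Pr(N=n)\le \left(\tfrac{3}{8}\right)^k|\mathcal Z|^{2n}\quad\text{for every positive integer } n.$$
   Context: Network: source nodes $s_1,s_2,s_3$ and a terminal $t$, with edges $(s_3,s_1),(s_3,s_2),(s_1,t),(s_2,t)$. Source $s_j$ observes $\mathbf X_j=(\mathbf X_j(1),\dots,\mathbf X_j(k))\in\{0,1\}^k$; all $3k$ bits are i.i.d. uniform on $\{0,1\}$. The edges $(s_3,s_1),(s_3,s_2)$ deliver $\mathbf X_3$ to $s_1$ and $s_2$. $\mathcal Z$ is a finite alphabet with $|\mathcal Z|\ge 2$ and $\mathcal Z^*$ the set of finite sequences over $\mathcal Z$. A variable-length $(k,N)$ network code consists of: encoding maps $\phi_1,\phi_2:\{0,1\}^k\times\{0,1\}^k\to\mathcal Z^*$, giving the sequences $\mathbf Z_1=\phi_1(\mathbf X_1,\mathbf X_3)$ (sent on $(s_1,t)$) and $\mathbf Z_2=\phi_2(\mathbf X_2,\mathbf X_3)$ (sent on $(s_2,t)$), with $\mathbf Z_j(m)$ the $m$-th symbol; a random variable $N$ with values in the positive integers that is a stopping time for the sequence $(\mathbf Z_1(1),\mathbf Z_2(1)),(\mathbf Z_1(2),\mathbf Z_2(2)),\dots$ (the event $\{N=n\}$ is determined by $(\mathbf Z_1(m),\mathbf Z_2(m))_{m\le n}$); and a decoder $\psi$ giving the estimate $\hat{\boldsymbol\Sigma}=\psi(\mathbf Z_1^N,\mathbf Z_2^N)\in\{0,1,2,3\}^k$,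 where $\mathbf Z_j^N=(\mathbf Z_j(1),\dots,\mathbf Z_j(N))$. The target is the componentwise integer sum $\boldsymbol\Sigma=\mathbf X_1+\mathbf X_2+\mathbf X_3\in\{0,1,2,3\}^k$. The code is zero-error if $\Pr(\hat{\boldsymbol\Sigma}\neq\boldsymbol\Sigma)=0$. *)

theory Defs
  imports "HOL-Probability.Probability"
begin

text \<open>Source observations: a triple (X1, X2, X3) of bit strings of length k,
  represented as bool lists.  The i.i.d. uniform bits correspond to the uniform
  distribution on the set of all such triples.\<close>

definition src_space :: "nat \<Rightarrow> (bool list \<times> bool list \<times> bool list) set" where
  "src_space k = {(x1, x2, x3). length x1 = k \<and> length x2 = k \<and> length x3 = k}"

definition src_pmf :: "nat \<Rightarrow> (bool list \<times> bool list \<times> bool list) pmf" where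
  "src_pmf k = pmf_of_set (src_space k)"

definition arith_sum3 :: "bool list \<times> bool list \<times> bool list \<Rightarrow> nat list" where
  "arith_sum3 x = (case x of (x1, x2, x3) \<Rightarrow>
     map (\<lambda>i. of_bool (x1 ! i) + of_bool (x2 ! i) + of_bool (x3 ! i)) [0..<length x1])"

definition seqZ1 :: "(bool list \<Rightarrow> bool list \<Rightarrow> 'z list) \<Rightarrow> bool list \<times> bool list \<times> bool list \<Rightarrow> 'z list" where
  "seqZ1 \<phi>1 x = (case x of (x1, x2, x3) \<Rightarrow> \<phi>1 x1 x3)"

definition seqZ2 :: "(bool list \<Rightarrow> bool list \<Rightarrow> 'z list) \<Rightarrow> bool list \<times> bool list \<times> bool list \<Rightarrow> 'z list" where
  "seqZ2 \<phi>2 x = (case x of (x1, x2, x3) \<Rightarrow> \<phi>2 x2 x3)"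

text \<open>A variable-length (k,N) network code (phi1, phi2, N, psi): N is a positive-integer
  valued function of the sources, the symbols Z_j(1..N) exist, and N is a stopping time:
  the event {N = n} is determined by the first n symbol pairs.\<close>
definition vl_network_code ::
  "nat \<Rightarrow> (bool list \<Rightarrow> bool list \<Rightarrow> 'z list) \<Rightarrow> (bool list \<Rightarrow> bool list \<Rightarrow> 'z list)
   \<Rightarrow> (bool list \<times> bool list \<times> bool list \<Rightarrow> nat) \<Rightarrow> ('z list \<Rightarrow> 'z list \<Rightarrow> nat list) \<Rightarrow> bool" where
  "vl_network_code k \<phi>1 \<phi>2 N \<psi> \<longleftrightarrow>
     (\<forall>x\<in>src_space k. 1 \<le> N x \<and> N x \<le> length (seqZ1 \<phi>1 x) \<and> N x \<le> length (seqZ2 \<phi>2 x)) \<and>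
     (\<forall>x\<in>src_space k. \<forall>x'\<in>src_space k. \<forall>n.
        take n (seqZ1 \<phi>1 x) = take n (seqZ1 \<phi>1 x') \<and>
        take n (seqZ2 \<phi>2 x) = take n (seqZ2 \<phi>2 x') \<and>
        length (take n (seqZ1 \<phi>1 x)) = n \<and> length (take n (seqZ2 \<phi>2 x)) = n
        \<longrightarrow> (N x = n \<longleftrightarrow> N x' = n))"

definition estimate ::
  "(bool list \<Rightarrow> bool list \<Rightarrow> 'z list) \<Rightarrow> (bool list \<Rightarrow> bool list \<Rightarrow> 'z list)
   \<Rightarrow> (bool list \<times> bool list \<times> bool list \<Rightarrow> nat) \<Rightarrow> ('z list \<Rightarrow> 'z list \<Rightarrow> nat list)
   \<Rightarrow> bool list \<times> bool list \<times> bool list \<Rightarrow> nat list" where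
  "estimate \<phi>1 \<phi>2 N \<psi> x = \<psi> (take (N x) (seqZ1 \<phi>1 x)) (take (N x) (seqZ2 \<phi>2 x))"

end

theory Submission
  imports Defs
begin

lemma lists_len_fin: "finite {xs::'a::finite list. length xs = n}"
  using finite_lists_length_eq[of "UNIV::'a set" n] by simp

lemma lists_len_card: "card {xs::'a::finite list. length xs = n} = CARD('a) ^ n"
  using card_lists_length_eq[of "UNIV::'a set" n] by simp

lemma src_space_eq: "src_space k = {xs. length xs = k} \<times> {xs. length xs = k} \<times> {xs. length xs = k}"
  by (auto simp: src_space_def)

lemma src_fin: "finite (src_space k)"
  unfolding src_space_eq by (intro finite_cartesian_product lists_len_fin)

lemma src_card: "card (src_space k) = 8 ^ k"
proof -
  have "card (src_space k) = (2^k) * ((2^k) * 2^k)"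
    unfolding src_space_eq card_cartesian_product lists_len_card by simp
  also have "\<dots> = 8 ^ k" by (simp add: power_mult_distrib[symmetric])
  finally show ?thesis .
qed

lemma src_ne: "src_space k \<noteq> {}"
  unfolding src_space_def by (auto intro!: exI[of _ "replicate k False"])

lemma sum_inj2:
  assumes "length a = k" "length b = k" "length b' = k" "length c = k"
    "arith_sum3 (a, b, c) = arith_sum3 (a, b', c)"
  shows "b = b'"
proof (rule nth_equalityI)
  show "length b = length b'" using assms by simp
  fix i assume "i < length b"
  then have "i < length a" using assms by simp
  then have "of_bool (a ! i) + of_bool (b ! i) + of_bool (c ! i)
      = (of_bool (a ! i) + of_bool (b' ! i) + of_bool (c ! i) :: nat)"
    using arg_cong[OF assms(5), of "\<lambda>l. l ! i"] by (simp add: arith_sum3_def)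
  then show "b ! i = b' ! i" by (cases "b ! i"; cases "b' ! i") auto
qed

lemma sum_inj1:
  assumes "length a = k" "length a' = k" "length b = k" "length c = k"
    "arith_sum3 (a, b, c) = arith_sum3 (a', b, c)"
  shows "a = a'"
proof (rule nth_equalityI)
  show "length a = length a'" using assms by simp
  fix i assume "i < length a"
  then have "of_bool (a ! i) + of_bool (b ! i) + of_bool (c ! i)
      = (of_bool (a' ! i) + of_bool (b ! i) + of_bool (c ! i) :: nat)"
    using arg_cong[OF assms(5), of "\<lambda>l. l ! i"] assms by (simp add: arith_sum3_def)
  then show "a ! i = a' ! i" by (cases "a ! i"; cases "a' ! i") auto
qed

theorem lemma2:
  fixes k :: nat
    and \<phi>1 \<phi>2 :: "bool list \<Rightarrow> bool list \<Rightarrow> 'z::finite list"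
    and N :: "bool list \<times> bool list \<times> bool list \<Rightarrow> nat"
    and \<psi> :: "'z list \<Rightarrow> 'z list \<Rightarrow> nat list"
  assumes "CARD('z) \<ge> 2"
    and "vl_network_code k \<phi>1 \<phi>2 N \<psi>"
    and "measure_pmf.prob (src_pmf k) {x. estimate \<phi>1 \<phi>2 N \<psi> x \<noteq> arith_sum3 x} = 0"
    and "n \<ge> 1"
  shows "measure_pmf.prob (src_pmf k) {x. N x = n} \<le> (3/8) ^ k * real CARD('z) ^ (2 * n)"
proof -
  let ?S = "src_space k"
  note fin = src_fin[of k] and ne = src_ne[of k]
  have zero: "estimate \<phi>1 \<phi>2 N \<psi> x = arith_sum3 x" if "x \<in> ?S" for x
  proof (rule ccontr)
    assume "estimate \<phi>1 \<phi>2 N \<psi> x \<noteq> arith_sum3 x"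
    then have "measure_pmf.prob (src_pmf k) {x. estimate \<phi>1 \<phi>2 N \<psi> x \<noteq> arith_sum3 x} > 0"
      using that fin ne by (intro measure_pmf_posI[of x]) (auto simp: src_pmf_def)
    with assms(3) show False by simp
  qed
  have len: "N x \<le> length (seqZ1 \<phi>1 x) \<and> N x \<le> length (seqZ2 \<phi>2 x)" if "x \<in> ?S" for x
    using assms(2) that unfolding vl_network_code_def by blast
  have stop: "\<And>x x' m. x \<in> ?S \<Longrightarrow> x' \<in> ?S \<Longrightarrow>
        take m (seqZ1 \<phi>1 x) = take m (seqZ1 \<phi>1 x') \<Longrightarrow>
        take m (seqZ2 \<phi>2 x) = take m (seqZ2 \<phi>2 x') \<Longrightarrow>
        length (take m (seqZ1 \<phi>1 x)) = m \<Longrightarrow> length (take m (seqZ2 \<phi>2 x)) = m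
        \<Longrightarrow> (N x = m \<longleftrightarrow> N x' = m)"
    using assms(2) unfolding vl_network_code_def by blast
  define A where "A = ?S \<inter> {x. N x = n}"
  define f where "f = (\<lambda>x. (take n (seqZ1 \<phi>1 x), take n (seqZ2 \<phi>2 x), snd (snd x)))"
  define T where "T = {xs::'z list. length xs = n} \<times> {xs::'z list. length xs = n} \<times> {xs::bool list. length xs = k}"
  have fA: "f ` A \<subseteq> T"
  proof
    fix y assume "y \<in> f ` A"
    then obtain x where x: "x \<in> ?S" "N x = n" "y = f x" unfolding A_def by auto
    show "y \<in> T" using len[OF x(1)] x unfolding T_def f_def
      by (auto simp: src_space_def)
  qed
  have inj: "inj_on f A"
  proof (rule inj_onI)
    fix x x' assume xA: "x \<in> A" and x'A: "x' \<in> A" and eq: "f x = f x'"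
    obtain a b c where xd: "x = (a, b, c)" by (cases x) auto
    obtain a' b' c' where x'd: "x' = (a', b', c')" by (cases x') auto
    have xS: "x \<in> ?S" and Nx: "N x = n" and x'S: "x' \<in> ?S" and Nx': "N x' = n"
      using xA x'A unfolding A_def by auto
    have lens: "length a = k" "length b = k" "length c = k" "length a' = k" "length b' = k" "length c' = k"
      using xS x'S xd x'd by (auto simp: src_space_def)
    have cc: "c' = c" and t1: "take n (\<phi>1 a c) = take n (\<phi>1 a' c)"
      and t2: "take n (\<phi>2 b c) = take n (\<phi>2 b' c)"
      using eq xd x'd unfolding f_def by (auto simp: seqZ1_def seqZ2_def)
    have l1: "n \<le> length (\<phi>1 a c)" "n \<le> length (\<phi>2 b c)"
      using len[OF xS] Nx xd by (auto simp: seqZ1_def seqZ2_def)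
    have est: "estimate \<phi>1 \<phi>2 N \<psi> x = \<psi> (take n (\<phi>1 a c)) (take n (\<phi>2 b c))"
      using Nx xd by (simp add: estimate_def seqZ1_def seqZ2_def)
    have est': "estimate \<phi>1 \<phi>2 N \<psi> x' = \<psi> (take n (\<phi>1 a c)) (take n (\<phi>2 b c))"
      using Nx' x'd cc t1 t2 by (simp add: estimate_def seqZ1_def seqZ2_def)
    have yS: "(a, b', c) \<in> ?S" using lens by (simp add: src_space_def)
    have Ny: "N (a, b', c) = n"
    proof -
      have L1: "length (take n (seqZ1 \<phi>1 x)) = n" using l1 xd by (simp add: seqZ1_def)
      have L2: "length (take n (seqZ2 \<phi>2 x)) = n" using l1 xd by (simp add: seqZ2_def)
      have E1: "take n (seqZ1 \<phi>1 x) = take n (seqZ1 \<phi>1 (a, b', c))" using xd by (simp add: seqZ1_def)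
      have E2: "take n (seqZ2 \<phi>2 x) = take n (seqZ2 \<phi>2 (a, b', c))" using xd t2 by (simp add: seqZ2_def)
      have "N x = n \<longleftrightarrow> N (a, b', c) = n" by (rule stop[OF xS yS E1 E2 L1 L2])
      then show ?thesis using Nx by (rule iffD1)
    qed
    have esty: "estimate \<phi>1 \<phi>2 N \<psi> (a, b', c) = \<psi> (take n (\<phi>1 a c)) (take n (\<phi>2 b c))"
      using Ny t2 by (simp add: estimate_def seqZ1_def seqZ2_def)
    have "arith_sum3 (a, b, c) = arith_sum3 (a, b', c)"
      using zero[OF xS] zero[OF yS] est esty xd by simp
    then have bb: "b = b'" by (rule sum_inj2[OF lens(1,2,5,3)])
    have "arith_sum3 (a, b, c) = arith_sum3 (a', b, c)"
      using zero[OF xS] zero[OF x'S] est est' xd x'd cc bb by simp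
    then have "a = a'" by (rule sum_inj1[OF lens(1,4,2,3)])
    then show "x = x'" using xd x'd bb cc by simp
  qed
  have finT: "finite T" unfolding T_def by (intro finite_cartesian_product lists_len_fin)
  have cardT: "card T = CARD('z) ^ n * CARD('z) ^ n * 2 ^ k"
    unfolding T_def card_cartesian_product lists_len_card by simp
  have cA: "card A \<le> CARD('z) ^ n * CARD('z) ^ n * 2 ^ k"
    using card_inj_on_le[OF inj fA finT] cardT by simp
  have "measure_pmf.prob (src_pmf k) {x. N x = n} = card A / card ?S"
    unfolding src_pmf_def A_def using measure_pmf_of_set[OF ne fin] by simp
  also have "\<dots> = real (card A) / 8 ^ k" by (simp add: src_card)
  also have "\<dots> \<le> real (CARD('z) ^ n * CARD('z) ^ n * 2 ^ k) / 8 ^ k"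
    using cA by (intro divide_right_mono of_nat_mono) auto
  also have "\<dots> = (2 / 8) ^ k * real CARD('z) ^ (2 * n)"
  proof -
    have e: "(8::real) ^ k = 2 ^ k * 4 ^ k" by (simp flip: power_mult_distrib)
    show ?thesis by (simp add: power_divide power_mult_distrib mult_2 power_add e)
  qed
  also have "\<dots> \<le> (3/8) ^ k * real CARD('z) ^ (2 * n)"
    by (intro mult_right_mono power_mono) auto
  finally show ?thesis .
qed

end
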